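(* Let $e$ be the environment assigning to every type variable the relation $=_{\beta\eta}$. Then: (1) for every $\forall^+$ type $P$, $\llbracket P\rrbracket_e \subseteq\ =_{\beta\eta}$ (i.e. $t\,\llbracket P\rrbracket_e\,t'$ implies $t=_{\beta\eta}t'$); (2) for every $\forall^-$ type $N$, $=_{\beta\eta}\ \subseteq \llbracket N\rrbracket_e$ (i.e. $t=_{\beta\eta}t'$ implies $t\,\llbracket N\rrbracket_e\,t'$).
   Context: Terms are those of the pure untyped $\lambda$-calculus, $t ::= x \mid \lambda x.t \mid t\,t'$, up to $\alpha$-equivalence; $=_{\beta\eta}$ is $\beta\eta$-convertibility. Relational types are given by $R ::= X \mid R\to R' \mid \forall X.R \mid R^{\cup} \mid R\cdot R' \mid t$, where $X$ ranges over type variables and the last form is the promotion of a term $t$ to a type. A binary relation $r$ on terms is $\beta\eta$-closed if $t_1\,r\,t_2$, $t_1'=_{\beta\eta}t_1$, $t_2'=_{\beta\eta}t_2$ imply $t_1'\,r\,t_2'$; $\mathcal{R}$ is the set of such relations. An environment $\gamma$ maps type variables to elements of $\mathcal{R}$; $\gamma[X\mapsto r]$ is its update. The interpretation (written $t\,\llbracket R\rrbracket_\gamma\,t'$ for membership) is: $\llbracket X\rrbracket_\gamma=\gamma(X)$; $t\,\llbracket R\to R'\rrbracket_\gamma\,t'$ iff for all $a,a'$ with $a\,\llbracket R\rrbracket_\gamma\,a'$ we have $t\,a\,\llbracket R'\rrbracket_\gamma\,t'\,a'$; $\llbracket \forall X.R\rrbracket_\gamma=\bigcap_{r\in\mathcal{R}}\llbracket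 R\rrbracket_{\gamma[X\mapsto r]}$; $t\,\llbracket R^\cup\rrbracket_\gamma\,t'$ iff $t'\,\llbracket R\rrbracket_\gamma\,t$; $t\,\llbracket R\cdot R'\rrbracket_\gamma\,t'$ iff there is $t''$ with $t\,\llbracket R\rrbracket_\gamma\,t''$ and $t''\,\llbracket R'\rrbracket_\gamma\,t'$; $\llbracket \hat t\rrbracket_\gamma=\{(t,t')\mid \hat t\,t=_{\beta\eta}t'\}$ for a promoted term $\hat t$. Polarities are $p\in\{+,-\}$, with $\bar p$ the other polarity. The property $\forall^p$ of types is defined inductively: every type variable is $\forall^p$; if $R$ is $\forall^{\bar p}$ and $R'$ is $\forall^p$ then $R\to R'$ is $\forall^p$; if $R$ is $\forall^+$ then $\forall X.R$ is $\forall^+$; if $R$ is $\forall^p$ then $R^\cup$ is $\forall^p$; the promotion of a term $t$ with $t=_{\beta\eta}\lambda x.x$ is $\forall^p$ (no other types are $\forall^p$). *)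

theory Defs
  imports Main
begin

datatype dB = Var nat | App dB dB | Abs dB

primrec lift :: "dB \<Rightarrow> nat \<Rightarrow> dB" where
  "lift (Var i) k = (if i < k then Var i else Var (i + 1))"
| "lift (App s t) k = App (lift s k) (lift t k)"
| "lift (Abs s) k = Abs (lift s (k + 1))"

primrec subst :: "dB \<Rightarrow> dB \<Rightarrow> nat \<Rightarrow> dB" where
  "subst (Var i) s k = (if k < i then Var (i - 1) else if i = k then s else Var i)"
| "subst (App t u) s k = App (subst t s k) (subst u s k)"
| "subst (Abs t) s k = Abs (subst t (lift s 0) (k + 1))"

inductive beta :: "dB \<Rightarrow> dB \<Rightarrow> bool" where
  beta_rule: "beta (App (Abs s) t) (subst s t 0)"
| beta_appL: "beta s t \<Longrightarrow> beta (App s u) (App t u)"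
| beta_appR: "beta s t \<Longrightarrow> beta (App u s) (App u t)"
| beta_abs: "beta s t \<Longrightarrow> beta (Abs s) (Abs t)"

inductive eta :: "dB \<Rightarrow> dB \<Rightarrow> bool" where
  eta_rule: "eta (Abs (App (lift s 0) (Var 0))) s"
| eta_appL: "eta s t \<Longrightarrow> eta (App s u) (App t u)"
| eta_appR: "eta s t \<Longrightarrow> eta (App u s) (App u t)"
| eta_abs: "eta s t \<Longrightarrow> eta (Abs s) (Abs t)"

definition betaeta :: "dB \<Rightarrow> dB \<Rightarrow> bool" where
  "betaeta = equivclp (sup beta eta)"

definition bclosed :: "(dB \<Rightarrow> dB \<Rightarrow> bool) \<Rightarrow> bool" where
  "bclosed r \<longleftrightarrow> (\<forall>t1 t2 t1' t2'. r t1 t2 \<longrightarrow> betaeta t1' t1 \<longrightarrow> betaeta t2' t2 \<longrightarrow> r t1' t2')"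

datatype 'v rtype =
    TVar 'v
  | Arr "'v rtype" "'v rtype"
  | All 'v "'v rtype"
  | Conv "'v rtype"
  | Comp "'v rtype" "'v rtype"
  | Prom dB

fun interp :: "'v rtype \<Rightarrow> ('v \<Rightarrow> dB \<Rightarrow> dB \<Rightarrow> bool) \<Rightarrow> dB \<Rightarrow> dB \<Rightarrow> bool" where
  "interp (TVar X) \<gamma> = \<gamma> X"
| "interp (Arr R R') \<gamma> =
     (\<lambda>t t'. \<forall>a a'. interp R \<gamma> a a' \<longrightarrow> interp R' \<gamma> (App t a) (App t' a'))"
| "interp (All X R) \<gamma> = (\<lambda>t t'. \<forall>r. bclosed r \<longrightarrow> interp R (\<gamma>(X := r)) t t')"
| "interp (Conv R) \<gamma> = (\<lambda>t t'. interp R \<gamma> t' t)"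
| "interp (Comp R R') \<gamma> = (\<lambda>t t'. \<exists>t''. interp R \<gamma> t t'' \<and> interp R' \<gamma> t'' t')"
| "interp (Prom s) \<gamma> = (\<lambda>t t'. betaeta (App s t) t')"

datatype pol = Pos | Neg

fun flip :: "pol \<Rightarrow> pol" where
  "flip Pos = Neg"
| "flip Neg = Pos"

inductive allp :: "pol \<Rightarrow> 'v rtype \<Rightarrow> bool" where
  allp_var: "allp p (TVar X)"
| allp_arr: "allp (flip p) R \<Longrightarrow> allp p R' \<Longrightarrow> allp p (Arr R R')"
| allp_all: "allp Pos R \<Longrightarrow> allp Pos (All X R)"
| allp_conv: "allp p R \<Longrightarrow> allp p (Conv R)"
| allp_prom: "betaeta t (Abs (Var 0)) \<Longrightarrow> allp p (Prom t)"

end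

theory Submission
  imports Defs
begin

lemma lift_lift: "i < k + 1 \<Longrightarrow> lift (lift t i) (Suc k) = lift (lift t k) i"
  by (induct t arbitrary: i k) auto

lemma lift_subst_lt: "i < j + 1 \<Longrightarrow> lift (subst t s j) i = subst (lift t i) (lift s i) (j + 1)"
  by (induct t arbitrary: i j s) (auto simp: lift_lift)

lemma lift_subst: "j < i + 1 \<Longrightarrow> lift (subst t s j) i = subst (lift t (i + 1)) (lift s i) j"
  by (induct t arbitrary: i j s) (auto simp: diff_Suc split: nat.split, simp_all add: lift_lift)

lemma subst_lift: "subst (lift t k) s k = t"
  by (induct t arbitrary: k s) auto

lemma subst_subst: "i < j + 1 \<Longrightarrow>
  subst (subst t (lift v i) (Suc j)) (subst u v j) i = subst (subst t u i) v j"
proof (induct t arbitrary: i j u v)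
  case (Var n)
  then show ?case by (auto simp: diff_Suc subst_lift lift_lift lift_subst lift_subst_lt split: nat.split)
next
  case (App t1 t2)
  then show ?case by simp
next
  case (Abs t)
  have "lift (lift v i) 0 = lift (lift v 0) (Suc i)" by (simp add: lift_lift)
  moreover have "lift (subst u v j) 0 = subst (lift u 0) (lift v 0) (Suc j)"
    by (simp add: lift_subst_lt)
  moreover have "subst (subst t (lift (lift v 0) (Suc i)) (Suc (Suc j))) (subst (lift u 0) (lift v 0) (Suc j)) (Suc i)
     = subst (subst t (lift u 0) (Suc i)) (lift v 0) (Suc j)"
    by (rule Abs(1)) (use Abs(2) in simp)
  ultimately show ?case by simp
qed

lemma beta_lift: "beta s t \<Longrightarrow> beta (lift s i) (lift t i)"
proof (induct arbitrary: i rule: beta.induct)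
  case (beta_rule s t)
  show ?case using beta.beta_rule[of "lift s (Suc i)" "lift t i"]
    by (simp add: lift_subst)
qed (auto intro: beta.intros)

lemma beta_subst: "beta s t \<Longrightarrow> beta (subst s u i) (subst t u i)"
proof (induct arbitrary: u i rule: beta.induct)
  case (beta_rule s t)
  show ?case using beta.beta_rule[of "subst s (lift u 0) (Suc i)" "subst t u i"]
    by (simp add: subst_subst[symmetric])
qed (auto intro: beta.intros)

lemma eta_lift: "eta s t \<Longrightarrow> eta (lift s i) (lift t i)"
proof (induct arbitrary: i rule: eta.induct)
  case (eta_rule s)
  show ?case using eta.eta_rule[of "lift s i"] by (simp add: lift_lift)
qed (auto intro: eta.intros)

lemma eta_subst: "eta s t \<Longrightarrow> eta (subst s u i) (subst t u i)"
proof (induct arbitrary: u i rule: eta.induct)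
  case (eta_rule s)
  show ?case using eta.eta_rule[of "subst s u i"] by (simp add: lift_subst_lt)
qed (auto intro: eta.intros)

lemma equivclp_map:
  assumes "\<And>x y. r x y \<Longrightarrow> r (f x) (f y)" and "equivclp r x y"
  shows "equivclp r (f x) (f y)"
  using assms(2)
proof (induct rule: equivclp_induct)
  case base then show ?case by simp
next
  case (step y z)
  from step(2) have "r (f y) (f z) \<or> r (f z) (f y)"
    by (auto simp: symclp_def intro: assms(1))
  with step(3) show ?case by (rule equivclp_into_equivclp)
qed

lemma be_map:
  assumes "\<And>x y. sup beta eta x y \<Longrightarrow> sup beta eta (f x) (f y)" and "betaeta x y"
  shows "betaeta (f x) (f y)"
  using assms equivclp_map unfolding betaeta_def by metis

lemma be_lift: "betaeta s t \<Longrightarrow> betaeta (lift s i) (lift t i)"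
  by (rule be_map) (auto intro: beta_lift eta_lift)

lemma be_subst: "betaeta s t \<Longrightarrow> betaeta (subst s u i) (subst t u i)"
  by (rule be_map[where f="\<lambda>x. subst x u i"]) (auto intro: beta_subst eta_subst)

lemma be_appL: "betaeta s t \<Longrightarrow> betaeta (App s u) (App t u)"
  by (rule be_map[where f="\<lambda>x. App x u"]) (auto intro: beta.intros eta.intros)

lemma be_appR: "betaeta s t \<Longrightarrow> betaeta (App u s) (App u t)"
  by (rule be_map[where f="\<lambda>x. App u x"]) (auto intro: beta.intros eta.intros)

lemma be_abs: "betaeta s t \<Longrightarrow> betaeta (Abs s) (Abs t)"
  by (rule be_map[where f="Abs"]) (auto intro: beta.intros eta.intros)

lemma be_sym: "betaeta s t \<Longrightarrow> betaeta t s"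
  unfolding betaeta_def by (rule equivclp_sym)

lemma be_trans: "betaeta s t \<Longrightarrow> betaeta t u \<Longrightarrow> betaeta s u"
  unfolding betaeta_def by (rule equivclp_trans)

lemma be_refl: "betaeta s s"
  unfolding betaeta_def by simp

lemma be_step_beta: "beta s t \<Longrightarrow> betaeta s t"
  unfolding betaeta_def by (rule r_into_equivclp) simp

lemma be_step_eta: "eta s t \<Longrightarrow> betaeta s t"
  unfolding betaeta_def by (rule r_into_equivclp) simp

primrec cl :: "nat \<Rightarrow> dB \<Rightarrow> bool" where
  "cl k (Var i) = (i < k)"
| "cl k (App s t) = (cl k s \<and> cl k t)"
| "cl k (Abs s) = cl (Suc k) s"

lemma cl_subst: "cl k u \<Longrightarrow> subst u s k = u"
  by (induct u arbitrary: k s) auto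

lemma cl_lift: "cl k u \<Longrightarrow> cl (Suc k) (lift u j)"
  by (induct u arbitrary: k j) auto

lemma cl_mono: "cl k u \<Longrightarrow> k \<le> m \<Longrightarrow> cl m u"
  by (induct u arbitrary: k m) auto

lemma cl_ex: "\<exists>k. cl k u"
proof (induct u)
  case (Var x) then show ?case by (intro exI[of _ "Suc x"]) simp
next
  case (App u1 u2)
  then obtain a b where "cl a u1" "cl b u2" by blast
  then show ?case by (intro exI[of _ "max a b"]) (auto intro: cl_mono)
next
  case (Abs u)
  then obtain a where "cl a u" by blast
  then show ?case by (intro exI[of _ a]) (auto intro: cl_mono)
qed

lemma ext_lemma:
  assumes "\<And>a. betaeta (App t a) (App t' a)"
  shows "betaeta t t'"
proof -
  obtain a where a: "cl a t" using cl_ex by blast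
  obtain b where b: "cl b t'" using cl_ex by blast
  define n where "n = max a b"
  have ct: "cl n t" "cl n t'" using a b cl_mono n_def by auto
  have "betaeta (App t (Var n)) (App t' (Var n))" by (rule assms)
  then have "betaeta (lift (App t (Var n)) 0) (lift (App t' (Var n)) 0)" by (rule be_lift)
  then have "betaeta (subst (lift (App t (Var n)) 0) (Var 0) (Suc n))
                     (subst (lift (App t' (Var n)) 0) (Var 0) (Suc n))" by (rule be_subst)
  then have "betaeta (App (lift t 0) (Var 0)) (App (lift t' 0) (Var 0))"
    using cl_subst[OF cl_lift[OF ct(1)]] cl_subst[OF cl_lift[OF ct(2)]] by simp
  then have "betaeta (Abs (App (lift t 0) (Var 0))) (Abs (App (lift t' 0) (Var 0)))"
    by (rule be_abs)
  then show ?thesis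
    by (meson be_step_eta be_sym be_trans eta.eta_rule)
qed

lemma main_ind:
  assumes "e = (\<lambda>X. betaeta)"
  shows "allp p R \<Longrightarrow> (p = Pos \<longrightarrow> (\<forall>t t'. interp R e t t' \<longrightarrow> betaeta t t'))
       \<and> (p = Neg \<longrightarrow> (\<forall>t t'. betaeta t t' \<longrightarrow> interp R e t t'))"
proof (induct rule: allp.induct)
  case (allp_var p X)
  then show ?case using assms by simp
next
  case (allp_arr p R R')
  show ?case
  proof (cases p)
    case Pos
    have IH1: "\<And>a a'. betaeta a a' \<Longrightarrow> interp R e a a'"
      using allp_arr(2) Pos by simp
    have IH2: "\<And>a a'. interp R' e a a' \<Longrightarrow> betaeta a a'"
      using allp_arr(4) Pos by simp
    show ?thesis using Pos
    proof (intro conjI impI allI)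
      fix t t' assume "interp (Arr R R') e t t'"
      then have "\<And>a. interp R' e (App t a) (App t' a)" using IH1[OF be_refl] by simp
      then show "betaeta t t'" using IH2 by (rule_tac ext_lemma) blast
    qed simp
  next
    case Neg
    have IH1: "\<And>a a'. interp R e a a' \<Longrightarrow> betaeta a a'"
      using allp_arr(2) Neg by simp
    have IH2: "\<And>a a'. betaeta a a' \<Longrightarrow> interp R' e a a'"
      using allp_arr(4) Neg by simp
    show ?thesis using Neg
    proof (intro conjI impI allI)
      fix t t' assume tt: "betaeta t t'"
      show "interp (Arr R R') e t t'"
      proof (simp only: interp.simps, intro allI impI)
        fix a a' assume "interp R e a a'"
        then have "betaeta a a'" by (rule IH1)
        then have "betaeta (App t a) (App t' a')"
          by (rule be_trans[OF be_appL[OF tt] be_appR])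
        then show "interp R' e (App t a) (App t' a')" by (rule IH2)
      qed
    qed simp
  qed
next
  case (allp_all R X)
  have bc: "bclosed betaeta" unfolding bclosed_def
  proof (intro allI impI)
    fix t1 t2 t1' t2' assume a: "betaeta t1 t2" "betaeta t1' t1" "betaeta t2' t2"
    show "betaeta t1' t2'" by (rule be_trans[OF be_trans[OF a(2) a(1)] be_sym[OF a(3)]])
  qed
  have "e(X := betaeta) = e" using assms by auto
  then show ?case using allp_all bc by (metis (no_types, lifting) interp.simps(3) pol.distinct(1))
next
  case (allp_conv p R)
  show ?case
  proof (intro conjI impI allI)
    fix t t' assume "p = Pos" "interp (Conv R) e t t'"
    then show "betaeta t t'" using allp_conv(2) by (simp add: be_sym)
  next
    fix t t' assume "p = Neg" "betaeta t t'"
    then show "interp (Conv R) e t t'" using allp_conv(2) by (simp add: be_sym)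
  qed
next
  case (allp_prom t p)
  have "betaeta (App t s) (App (Abs (Var 0)) s)" for s
    by (rule be_appL) fact
  moreover have "betaeta (App (Abs (Var 0)) s) s" for s
    using be_step_beta[OF beta.beta_rule[of "Var 0" s]] by simp
  ultimately have k: "betaeta (App t s) s" for s by (rule be_trans)
  show ?case
  proof (intro conjI impI allI)
    fix s s' assume "interp (Prom t) e s s'"
    then have "betaeta (App t s) s'" by simp
    then show "betaeta s s'" by (rule be_trans[OF be_sym[OF k]])
  next
    fix s s' assume "betaeta s s'"
    then have "betaeta (App t s) s'" by (rule be_trans[OF k])
    then show "interp (Prom t) e s s'" by simp
  qed
qed

theorem mainTheorem1:
  fixes e :: "'v \<Rightarrow> dB \<Rightarrow> dB \<Rightarrow> bool"
  assumes "e = (\<lambda>X. betaeta)"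
  shows "(\<forall>P :: 'v rtype. allp Pos P \<longrightarrow> (\<forall>t t'. interp P e t t' \<longrightarrow> betaeta t t'))
       \<and> (\<forall>N :: 'v rtype. allp Neg N \<longrightarrow> (\<forall>t t'. betaeta t t' \<longrightarrow> interp N e t t'))"
  using main_ind[OF assms] by blast

end
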